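(* Assume Assumption A. Let $\{\mathscr F_1,\dots,\mathscr F_{\mathfrak p},\Delta_{\mathscr F}\}$, $\mathfrak p\ge2$, be a partition of $E$ and $\beta^-_N,\beta_N$ positive sequences with $\beta^-_N/\beta_N\to0$ satisfying (H0)–(H3) with $(a_N,b_N)=(\beta^-_N,\beta_N)$. Let $X_{\mathscr F}$ be the Markov chain on $P=\{1,\dots,\mathfrak p\}$ with rates $r_{\mathscr F}(x,y)$ from (H1), $G_1,\dots,G_{\mathfrak q}$ its recurrent classes, $\mathscr G_a=\bigcup_{x\in G_a}\mathscr F_x$, $\breve{\mathscr G}_a=\bigcup_{b\ne a}\mathscr G_b$, assume $\mathfrak q>1$ and set $1/\beta^+_N=\sum_{a=1}^{\mathfrak q}\mathrm{Cap}_N(\mathscr G_a,\breve{\mathscr G}_a)/\mu_N(\mathscr G_a)$. Then $\lim_{N\to\infty}\beta_N/\beta^+_N=0$.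
   Context: Setting: $E$ is a fixed finite set. For each $N\ge1$, $(\eta^N_t)$ is a continuous-time irreducible Markov chain on $E$ with jump rates $R_N(\eta,\xi)$, holding rates $\lambda_N(\eta)=\sum_{\xi\neq\eta}R_N(\eta,\xi)$ and unique invariant probability $\mu_N$; $\mathbb P_\eta,\mathbb E_\eta$ law/expectation from $\eta$. $H_A=\inf\{t>0:\eta^N_t\in A\}$, $H^+_A=\inf\{t>\tau_1:\eta^N_t\in A\}$, $\tau_1$ first jump time; $\mathrm{Cap}_N(A,B)=\sum_{\eta\in A}\mu_N(\eta)\lambda_N(\eta)\mathbb P_\eta[H_B<H^+_A]$, $\mathrm{Cap}_N(\eta,\xi)=\mathrm{Cap}_N(\{\eta\},\{\xi\})$. The trace on nonempty $F\subset E$ is $\eta^F_t=\eta^N_{S_F(t)}$, $S_F(t)=\sup\{s:\int_0^s\mathbf 1\{\eta^N_r\in F\}dr\le t\}$, with jump rates $R^F_N$. Ordered families: a finite family of sequences of positive reals $(a^r_N)$, $r\in\mathfrak R$, is ordered if for all $r\neq s$, $\arctan(a^r_N/a^s_N)$ converges. Assumption A: (i) for each $\eta\neq\xi$, either $R_N(\eta,\xi)=0$ for all $N$ or $>0$ for all $N$; $\mathbb B$ is the set of pairs with positive rates; (ii) for every $m\ge1$ the family $\prod_{(\eta,\xi)\in\mathbb B}R_N(\eta,\xi)^{k(\eta,\xi)}$, $k:\mathbb B\to\mathbb Z_+$, $\sum k=m$, is ordered. Conditions for a partition $\{\mathscr F_1,\dots,\mathscr F_{\mathfrak p},\Delta_{\mathscr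 F}\}$ (independent of $N$) and $(a_N,b_N)$, with $\mathscr F=\bigcup_x\mathscr F_x$ and $r^{\mathscr F}_N(\mathscr F_x,\mathscr F_y)=\mu_N(\mathscr F_x)^{-1}\sum_{\eta\in\mathscr F_x}\mu_N(\eta)\sum_{\xi\in\mathscr F_y}R^{\mathscr F}_N(\eta,\xi)$: (H0) for each $x$, $\eta\in\mathscr F_x$, $\lim_N\mu_N(\eta)/\mu_N(\mathscr F_x)\in(0,1]$ exists; (H1) for $x\ne y$, $r_{\mathscr F}(x,y):=\lim_Nb_Nr^{\mathscr F}_N(\mathscr F_x,\mathscr F_y)\in[0,\infty)$ exists, and $\sum_x\sum_{y\ne x}r_{\mathscr F}(x,y)>0$; (H2) for $|\mathscr F_x|\ge2$, $\eta\ne\xi\in\mathscr F_x$: $\liminf_Na_N\mathrm{Cap}_N(\eta,\xi)/\mu_N(\mathscr F_x)>0$; (H3) for every $t>0$, $\lim_N\max_\eta\mathbb E_\eta[\int_0^t\mathbf 1\{\eta^N_{sb_N}\in\Delta_{\mathscr F}\}ds]=0$. *)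

theory Defs
  imports "HOL-Analysis.Analysis"
begin

text \<open>Finite state space: a type of class finite. Rates R :: 'e => 'e => real
  (diagonal values are ignored).\<close>

definition hold_rate :: "('e::finite \<Rightarrow> 'e \<Rightarrow> real) \<Rightarrow> 'e \<Rightarrow> real" where
  "hold_rate R \<eta> = (\<Sum>\<xi>\<in>UNIV - {\<eta>}. R \<eta> \<xi>)"

definition jump_prob :: "('e::finite \<Rightarrow> 'e \<Rightarrow> real) \<Rightarrow> 'e \<Rightarrow> 'e \<Rightarrow> real" where
  "jump_prob R \<eta> \<xi> = (if \<xi> = \<eta> then 0 else R \<eta> \<xi> / hold_rate R \<eta>)"

text \<open>hit_step R A B n z: probability, for the jump chain started at z, that the
  n-th jump lands in B - A and jumps 1..n-1 land outside A \<union> B.\<close>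
fun hit_step :: "('e::finite \<Rightarrow> 'e \<Rightarrow> real) \<Rightarrow> 'e set \<Rightarrow> 'e set \<Rightarrow> nat \<Rightarrow> 'e \<Rightarrow> real" where
  "hit_step R A B 0 z = 0"
| "hit_step R A B (Suc 0) z = (\<Sum>\<xi>\<in>B - A. jump_prob R z \<xi>)"
| "hit_step R A B (Suc (Suc n)) z =
     (\<Sum>\<xi>\<in>- (A \<union> B). jump_prob R z \<xi> * hit_step R A B (Suc n) \<xi>)"

text \<open>escape_prob R eta A B = P_eta[H_B < H^+_A] (for disjoint A, B, eta not in B).\<close>
definition escape_prob :: "('e::finite \<Rightarrow> 'e \<Rightarrow> real) \<Rightarrow> 'e \<Rightarrow> 'e set \<Rightarrow> 'e set \<Rightarrow> real" where
  "escape_prob R \<eta> A B = (\<Sum>n. hit_step R A B n \<eta>)"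

definition cap :: "('e::finite \<Rightarrow> real) \<Rightarrow> ('e \<Rightarrow> 'e \<Rightarrow> real) \<Rightarrow> 'e set \<Rightarrow> 'e set \<Rightarrow> real" where
  "cap \<mu> R A B = (\<Sum>\<eta>\<in>A. \<mu> \<eta> * hold_rate R \<eta> * escape_prob R \<eta> A B)"

text \<open>Jump rates of the trace process on F: R^F(eta,xi) = lambda(eta) P_eta[H^+_F = H_xi].\<close>
definition trace_rate :: "('e::finite \<Rightarrow> 'e \<Rightarrow> real) \<Rightarrow> 'e set \<Rightarrow> 'e \<Rightarrow> 'e \<Rightarrow> real" where
  "trace_rate R F \<eta> \<xi> = hold_rate R \<eta> * escape_prob R \<eta> (F - {\<xi>}) {\<xi>}"

definition gen_matrix :: "('e::finite \<Rightarrow> 'e \<Rightarrow> real) \<Rightarrow> 'e \<Rightarrow> 'e \<Rightarrow> real" where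
  "gen_matrix R \<eta> \<xi> = (if \<eta> = \<xi> then - hold_rate R \<eta> else R \<eta> \<xi>)"

fun mpow :: "('e::finite \<Rightarrow> 'e \<Rightarrow> real) \<Rightarrow> nat \<Rightarrow> 'e \<Rightarrow> 'e \<Rightarrow> real" where
  "mpow M 0 = (\<lambda>\<eta> \<xi>. if \<eta> = \<xi> then 1 else 0)"
| "mpow M (Suc n) = (\<lambda>\<eta> \<xi>. \<Sum>\<zeta>\<in>UNIV. mpow M n \<eta> \<zeta> * M \<zeta> \<xi>)"

text \<open>Transition semigroup p_t = exp(t L): semigroup R t eta xi = P_eta[eta_t = xi].\<close>
definition semigroup :: "('e::finite \<Rightarrow> 'e \<Rightarrow> real) \<Rightarrow> real \<Rightarrow> 'e \<Rightarrow> 'e \<Rightarrow> real" where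
  "semigroup R t \<eta> \<xi> = (\<Sum>n. t ^ n / fact n * mpow (gen_matrix R) n \<eta> \<xi>)"

definition markov_setting :: "(nat \<Rightarrow> 'e::finite \<Rightarrow> 'e \<Rightarrow> real) \<Rightarrow> (nat \<Rightarrow> 'e \<Rightarrow> real) \<Rightarrow> bool" where
  "markov_setting R \<mu> \<longleftrightarrow> (\<forall>N\<ge>1.
      (\<forall>\<eta> \<xi>. \<eta> \<noteq> \<xi> \<longrightarrow> R N \<eta> \<xi> \<ge> 0)
    \<and> (\<forall>\<eta> \<xi>. (\<eta>, \<xi>) \<in> {(a, b). a \<noteq> b \<and> R N a b > 0}\<^sup>*)
    \<and> (\<forall>\<eta>. \<mu> N \<eta> \<ge> 0) \<and> (\<Sum>\<eta>\<in>UNIV. \<mu> N \<eta>) = 1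
    \<and> (\<forall>\<xi>. (\<Sum>\<eta>\<in>UNIV. \<mu> N \<eta> * gen_matrix (R N) \<eta> \<xi>) = 0))"

definition ordered_family :: "'i set \<Rightarrow> ('i \<Rightarrow> nat \<Rightarrow> real) \<Rightarrow> bool" where
  "ordered_family I a \<longleftrightarrow> (\<forall>r\<in>I. \<forall>s\<in>I. r \<noteq> s \<longrightarrow> convergent (\<lambda>N. arctan (a r N / a s N)))"

definition positive_pairs :: "(nat \<Rightarrow> 'e \<Rightarrow> 'e \<Rightarrow> real) \<Rightarrow> ('e \<times> 'e) set" where
  "positive_pairs R = {(\<eta>, \<xi>). \<eta> \<noteq> \<xi> \<and> (\<forall>N\<ge>1. R N \<eta> \<xi> > 0)}"

definition assumption_A :: "(nat \<Rightarrow> 'e::finite \<Rightarrow> 'e \<Rightarrow> real) \<Rightarrow> bool" where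
  "assumption_A R \<longleftrightarrow>
     (\<forall>\<eta> \<xi>. \<eta> \<noteq> \<xi> \<longrightarrow> (\<forall>N\<ge>1. R N \<eta> \<xi> = 0) \<or> (\<forall>N\<ge>1. R N \<eta> \<xi> > 0))
   \<and> (\<forall>m\<ge>1. ordered_family
        {k :: 'e \<times> 'e \<Rightarrow> nat. (\<forall>p. p \<notin> positive_pairs R \<longrightarrow> k p = 0)
                             \<and> (\<Sum>p\<in>positive_pairs R. k p) = m}
        (\<lambda>k N. \<Prod>p\<in>positive_pairs R. R N (fst p) (snd p) ^ k p))"

definition is_partition :: "(nat \<Rightarrow> 'e set) \<Rightarrow> nat \<Rightarrow> 'e set \<Rightarrow> bool" where
  "is_partition \<F> p \<Delta> \<longleftrightarrow>
     (\<forall>x\<in>{1..p}. \<F> x \<noteq> {})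
   \<and> (\<forall>x\<in>{1..p}. \<forall>y\<in>{1..p}. x \<noteq> y \<longrightarrow> \<F> x \<inter> \<F> y = {})
   \<and> (\<forall>x\<in>{1..p}. \<F> x \<inter> \<Delta> = {})
   \<and> (\<Union>x\<in>{1..p}. \<F> x) \<union> \<Delta> = UNIV"

definition reduced_rate :: "('e::finite \<Rightarrow> real) \<Rightarrow> ('e \<Rightarrow> 'e \<Rightarrow> real) \<Rightarrow> 'e set \<Rightarrow> 'e set \<Rightarrow> 'e set \<Rightarrow> real" where
  "reduced_rate \<mu> R F Fx Fy =
     (\<Sum>\<eta>\<in>Fx. \<mu> \<eta> * (\<Sum>\<xi>\<in>Fy. trace_rate R F \<eta> \<xi>)) / sum \<mu> Fx"

definition H0 :: "(nat \<Rightarrow> 'e::finite \<Rightarrow> real) \<Rightarrow> (nat \<Rightarrow> 'e set) \<Rightarrow> nat \<Rightarrow> bool" where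
  "H0 \<mu> \<F> p \<longleftrightarrow> (\<forall>x\<in>{1..p}. \<forall>\<eta>\<in>\<F> x. \<exists>L. 0 < L \<and> L \<le> 1 \<and>
       (\<lambda>N. \<mu> N \<eta> / sum (\<mu> N) (\<F> x)) \<longlonglongrightarrow> L)"

definition H1 :: "(nat \<Rightarrow> 'e::finite \<Rightarrow> real) \<Rightarrow> (nat \<Rightarrow> 'e \<Rightarrow> 'e \<Rightarrow> real) \<Rightarrow> (nat \<Rightarrow> 'e set) \<Rightarrow> nat
                   \<Rightarrow> (nat \<Rightarrow> real) \<Rightarrow> (nat \<Rightarrow> nat \<Rightarrow> real) \<Rightarrow> bool" where
  "H1 \<mu> R \<F> p b r \<longleftrightarrow>
     (\<forall>x\<in>{1..p}. \<forall>y\<in>{1..p}. x \<noteq> y \<longrightarrow>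
        (\<lambda>N. b N * reduced_rate (\<mu> N) (R N) (\<Union>z\<in>{1..p}. \<F> z) (\<F> x) (\<F> y)) \<longlonglongrightarrow> r x y)
   \<and> (\<Sum>x\<in>{1..p}. \<Sum>y\<in>{1..p} - {x}. r x y) > 0"

definition H2 :: "(nat \<Rightarrow> 'e::finite \<Rightarrow> real) \<Rightarrow> (nat \<Rightarrow> 'e \<Rightarrow> 'e \<Rightarrow> real) \<Rightarrow> (nat \<Rightarrow> 'e set) \<Rightarrow> nat
                   \<Rightarrow> (nat \<Rightarrow> real) \<Rightarrow> bool" where
  "H2 \<mu> R \<F> p a \<longleftrightarrow>
     (\<forall>x\<in>{1..p}. card (\<F> x) \<ge> 2 \<longrightarrow> (\<forall>\<eta>\<in>\<F> x. \<forall>\<xi>\<in>\<F> x. \<eta> \<noteq> \<xi> \<longrightarrow>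
        liminf (\<lambda>N. ereal (a N * cap (\<mu> N) (R N) {\<eta>} {\<xi>} / sum (\<mu> N) (\<F> x))) > 0))"

definition H3 :: "(nat \<Rightarrow> 'e::finite \<Rightarrow> 'e \<Rightarrow> real) \<Rightarrow> 'e set \<Rightarrow> (nat \<Rightarrow> real) \<Rightarrow> bool" where
  "H3 R \<Delta> b \<longleftrightarrow> (\<forall>t>0.
     (\<lambda>N. Max (range (\<lambda>\<eta>. integral {0..t}
            (\<lambda>s. \<Sum>\<xi>\<in>\<Delta>. semigroup (R N) (s * b N) \<eta> \<xi>)))) \<longlonglongrightarrow> 0)"

definition chain_reach :: "nat set \<Rightarrow> (nat \<Rightarrow> nat \<Rightarrow> real) \<Rightarrow> nat \<Rightarrow> nat \<Rightarrow> bool" where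
  "chain_reach P r x y \<longleftrightarrow> (x, y) \<in> {(a, b). a \<in> P \<and> b \<in> P \<and> a \<noteq> b \<and> r a b > 0}\<^sup>*"

definition recurrent_classes :: "nat set \<Rightarrow> (nat \<Rightarrow> nat \<Rightarrow> real) \<Rightarrow> nat set set" where
  "recurrent_classes P r = {G. \<exists>x\<in>P. (\<forall>y\<in>P. chain_reach P r x y \<longrightarrow> chain_reach P r y x)
                                 \<and> G = {y\<in>P. chain_reach P r x y}}"

end

theory Submission
  imports Defs
begin


definition Sh :: "('e::finite \<Rightarrow> 'e \<Rightarrow> real) \<Rightarrow> 'e set \<Rightarrow> 'e set \<Rightarrow> nat \<Rightarrow> 'e \<Rightarrow> real" where
  "Sh R A B K z = (\<Sum>k<K. hit_step R A B (Suc k) z)"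

lemma hold_nonneg:
  assumes "\<forall>\<eta> \<xi>. \<eta> \<noteq> \<xi> \<longrightarrow> R \<eta> \<xi> \<ge> (0::real)"
  shows "hold_rate R \<eta> \<ge> 0"
  unfolding hold_rate_def using assms by (intro sum_nonneg) auto

lemma jp_nonneg:
  assumes "\<forall>\<eta> \<xi>. \<eta> \<noteq> \<xi> \<longrightarrow> R \<eta> \<xi> \<ge> (0::real)"
  shows "jump_prob R \<eta> \<xi> \<ge> 0"
  unfolding jump_prob_def using assms hold_nonneg[OF assms] by auto

lemma jp_univ:
  assumes "\<forall>\<eta> \<xi>. \<eta> \<noteq> \<xi> \<longrightarrow> R \<eta> \<xi> \<ge> (0::real)"
  shows "(\<Sum>\<xi>\<in>UNIV. jump_prob R \<eta> \<xi>) \<le> 1"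
proof -
  have "(\<Sum>\<xi>\<in>UNIV. jump_prob R \<eta> \<xi>) = (\<Sum>\<xi>\<in>UNIV - {\<eta>}. R \<eta> \<xi> / hold_rate R \<eta>)"
    unfolding jump_prob_def by (rule sum.mono_neutral_cong_right) auto
  also have "\<dots> = hold_rate R \<eta> / hold_rate R \<eta>"
    unfolding hold_rate_def by (simp add: sum_divide_distrib[symmetric])
  also have "\<dots> \<le> 1" by (cases "hold_rate R \<eta> = 0") auto
  finally show ?thesis .
qed

lemma jp_sum_le:
  assumes "\<forall>\<eta> \<xi>. \<eta> \<noteq> \<xi> \<longrightarrow> R \<eta> \<xi> \<ge> (0::real)"
  shows "(\<Sum>\<xi>\<in>S. jump_prob R \<eta> \<xi>) \<le> 1"
proof -
  have "(\<Sum>\<xi>\<in>S. jump_prob R \<eta> \<xi>) \<le> (\<Sum>\<xi>\<in>UNIV. jump_prob R \<eta> \<xi>)"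
    by (rule sum_mono2) (auto intro: jp_nonneg[OF assms])
  then show ?thesis using jp_univ[OF assms, of \<eta>] by linarith
qed

lemma hit_nonneg:
  assumes "\<forall>\<eta> \<xi>. \<eta> \<noteq> \<xi> \<longrightarrow> R \<eta> \<xi> \<ge> (0::real)"
  shows "hit_step R A B n z \<ge> 0"
  using assms by (induction R A B n z rule: hit_step.induct)
     (auto intro!: sum_nonneg mult_nonneg_nonneg jp_nonneg)

lemma Sh_rec:
  "Sh R A B (Suc K) z = (\<Sum>\<xi>\<in>B - A. jump_prob R z \<xi>)
     + (\<Sum>\<xi>\<in>- (A \<union> B). jump_prob R z \<xi> * Sh R A B K \<xi>)"
proof -
  have "Sh R A B (Suc K) z = hit_step R A B (Suc 0) z + (\<Sum>k<K. hit_step R A B (Suc (Suc k)) z)"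
    unfolding Sh_def by (subst sum.lessThan_Suc_shift) simp
  also have "(\<Sum>k<K. hit_step R A B (Suc (Suc k)) z)
      = (\<Sum>\<xi>\<in>- (A \<union> B). jump_prob R z \<xi> * Sh R A B K \<xi>)"
    unfolding Sh_def by (simp add: sum_distrib_left sum.swap[of _ "{..<K}"])
  finally show ?thesis by simp
qed

lemma Sh_nonneg:
  assumes "\<forall>\<eta> \<xi>. \<eta> \<noteq> \<xi> \<longrightarrow> R \<eta> \<xi> \<ge> (0::real)"
  shows "Sh R A B K z \<ge> 0"
  unfolding Sh_def by (intro sum_nonneg hit_nonneg[OF assms])

lemma Sh_le1:
  assumes R: "\<forall>\<eta> \<xi>. \<eta> \<noteq> \<xi> \<longrightarrow> R \<eta> \<xi> \<ge> (0::real)"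
  shows "Sh R A B K z \<le> 1"
proof (induction K arbitrary: z)
  case 0 then show ?case by (simp add: Sh_def)
next
  case (Suc K)
  have "(\<Sum>\<xi>\<in>- (A \<union> B). jump_prob R z \<xi> * Sh R A B K \<xi>) \<le> (\<Sum>\<xi>\<in>- (A \<union> B). jump_prob R z \<xi>)"
    by (intro sum_mono) (simp add: Suc.IH jp_nonneg[OF R] mult_left_le)
  moreover have "(\<Sum>\<xi>\<in>B - A. jump_prob R z \<xi>) + (\<Sum>\<xi>\<in>- (A \<union> B). jump_prob R z \<xi>)
      = (\<Sum>\<xi>\<in>(B - A) \<union> - (A \<union> B). jump_prob R z \<xi>)"
    by (subst sum.union_disjoint) auto
  moreover have "\<dots> \<le> 1" by (rule jp_sum_le[OF R])
  ultimately show ?case unfolding Sh_rec by linarith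
qed

lemma hit_summable:
  assumes R: "\<forall>\<eta> \<xi>. \<eta> \<noteq> \<xi> \<longrightarrow> R \<eta> \<xi> \<ge> (0::real)"
  shows "summable (\<lambda>n. hit_step R A B n z)"
proof (rule summableI_nonneg_bounded[where x=1])
  show "0 \<le> hit_step R A B n z" for n by (rule hit_nonneg[OF R])
  show "(\<Sum>i<n. hit_step R A B i z) \<le> 1" for n
  proof (cases n)
    case 0 then show ?thesis by simp
  next
    case (Suc m)
    have "(\<Sum>i<n. hit_step R A B i z) = Sh R A B m z"
      unfolding Suc Sh_def by (subst sum.lessThan_Suc_shift) simp
    then show ?thesis using Sh_le1[OF R] by simp
  qed
qed

lemma Sh_lim:
  assumes R: "\<forall>\<eta> \<xi>. \<eta> \<noteq> \<xi> \<longrightarrow> R \<eta> \<xi> \<ge> (0::real)"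
  shows "(\<lambda>K. Sh R A B K z) \<longlonglongrightarrow> escape_prob R z A B"
proof -
  have "(\<lambda>n. \<Sum>i<n. hit_step R A B i z) \<longlonglongrightarrow> escape_prob R z A B"
    unfolding escape_prob_def by (rule summable_LIMSEQ[OF hit_summable[OF R]])
  then have "(\<lambda>K. \<Sum>i<Suc K. hit_step R A B i z) \<longlonglongrightarrow> escape_prob R z A B"
    by (rule LIMSEQ_Suc)
  moreover have "(\<Sum>i<Suc K. hit_step R A B i z) = Sh R A B K z" for K
    unfolding Sh_def by (subst sum.lessThan_Suc_shift) simp
  ultimately show ?thesis by simp
qed

lemma escape_nonneg:
  assumes R: "\<forall>\<eta> \<xi>. \<eta> \<noteq> \<xi> \<longrightarrow> R \<eta> \<xi> \<ge> (0::real)"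
  shows "escape_prob R z A B \<ge> 0"
  unfolding escape_prob_def by (intro suminf_nonneg hit_summable[OF R] hit_nonneg[OF R])

lemma Sh_compare:
  assumes R: "\<forall>\<eta> \<xi>. \<eta> \<noteq> \<xi> \<longrightarrow> R \<eta> \<xi> \<ge> (0::real)"
    and AF: "A \<subseteq> F" and BF: "B \<subseteq> F"
  shows "Sh R A B K z \<le> (\<Sum>\<zeta>\<in>F - A. Sh R (F - {\<zeta>}) {\<zeta>} K z)"
proof (induction K arbitrary: z)
  case 0 then show ?case by (simp add: Sh_def)
next
  case (Suc K)
  let ?P = "jump_prob R z"
  let ?g = "\<lambda>\<xi>. (\<Sum>\<zeta>\<in>F - A. Sh R (F - {\<zeta>}) {\<zeta>} K \<xi>)"
  have split1: "(\<Sum>\<xi>\<in>- (A \<union> B). ?P \<xi> * Sh R A B K \<xi>)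
     = (\<Sum>\<xi>\<in>F - (A \<union> B). ?P \<xi> * Sh R A B K \<xi>) + (\<Sum>\<xi>\<in>- F. ?P \<xi> * Sh R A B K \<xi>)"
  proof -
    have e: "- (A \<union> B) = (F - (A \<union> B)) \<union> - F" using AF BF by auto
    show ?thesis unfolding e by (rule sum.union_disjoint) auto
  qed
  have b1: "(\<Sum>\<xi>\<in>F - (A \<union> B). ?P \<xi> * Sh R A B K \<xi>) \<le> (\<Sum>\<xi>\<in>F - (A \<union> B). ?P \<xi>)"
    by (intro sum_mono) (simp add: Sh_le1[OF R] jp_nonneg[OF R] mult_left_le)
  have b2: "(\<Sum>\<xi>\<in>- F. ?P \<xi> * Sh R A B K \<xi>) \<le> (\<Sum>\<xi>\<in>- F. ?P \<xi> * ?g \<xi>)"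
    by (intro sum_mono mult_left_mono Suc.IH jp_nonneg[OF R])
  have split2: "(\<Sum>\<xi>\<in>F - A. ?P \<xi>) = (\<Sum>\<xi>\<in>B - A. ?P \<xi>) + (\<Sum>\<xi>\<in>F - (A \<union> B). ?P \<xi>)"
  proof -
    have e: "F - A = (B - A) \<union> (F - (A \<union> B))" using BF by auto
    show ?thesis unfolding e by (rule sum.union_disjoint) auto
  qed
  have rhs: "(\<Sum>\<zeta>\<in>F - A. Sh R (F - {\<zeta>}) {\<zeta>} (Suc K) z)
      = (\<Sum>\<xi>\<in>F - A. ?P \<xi>) + (\<Sum>\<xi>\<in>- F. ?P \<xi> * ?g \<xi>)"
  proof -
    have "Sh R (F - {\<zeta>}) {\<zeta>} (Suc K) z = ?P \<zeta> + (\<Sum>\<xi>\<in>- F. ?P \<xi> * Sh R (F - {\<zeta>}) {\<zeta>} K \<xi>)"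
      if "\<zeta> \<in> F - A" for \<zeta>
    proof -
      have e1: "{\<zeta>} - (F - {\<zeta>}) = {\<zeta>}" by auto
      have e2: "- ((F - {\<zeta>}) \<union> {\<zeta>}) = - F" using that by auto
      show ?thesis unfolding Sh_rec e1 e2 by simp
    qed
    then have "(\<Sum>\<zeta>\<in>F - A. Sh R (F - {\<zeta>}) {\<zeta>} (Suc K) z)
        = (\<Sum>\<zeta>\<in>F - A. ?P \<zeta> + (\<Sum>\<xi>\<in>- F. ?P \<xi> * Sh R (F - {\<zeta>}) {\<zeta>} K \<xi>))"
      by (rule sum.cong[OF refl])
    also have "\<dots> = (\<Sum>\<xi>\<in>F - A. ?P \<xi>) + (\<Sum>\<xi>\<in>- F. ?P \<xi> * ?g \<xi>)"
      by (simp add: sum.distrib sum_distrib_left sum.swap[of _ "F - A"])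
    finally show ?thesis .
  qed
  show ?case unfolding Sh_rec[of R A B] rhs split1 split2 using b1 b2 by linarith
qed

lemma escape_compare:
  assumes R: "\<forall>\<eta> \<xi>. \<eta> \<noteq> \<xi> \<longrightarrow> R \<eta> \<xi> \<ge> (0::real)"
    and AF: "A \<subseteq> F" and BF: "B \<subseteq> F"
  shows "escape_prob R z A B \<le> (\<Sum>\<zeta>\<in>F - A. escape_prob R z (F - {\<zeta>}) {\<zeta>})"
proof (rule LIMSEQ_le[OF Sh_lim[OF R]])
  show "(\<lambda>K. \<Sum>\<zeta>\<in>F - A. Sh R (F - {\<zeta>}) {\<zeta>} K z) \<longlonglongrightarrow> (\<Sum>\<zeta>\<in>F - A. escape_prob R z (F - {\<zeta>}) {\<zeta>})"
    by (intro tendsto_sum Sh_lim[OF R])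
  show "\<exists>N. \<forall>n\<ge>N. Sh R A B n z \<le> (\<Sum>\<zeta>\<in>F - A. Sh R (F - {\<zeta>}) {\<zeta>} n z)"
    using Sh_compare[OF R AF BF] by blast
qed



lemma num_eq:
  assumes "\<forall>\<eta>. \<mu> \<eta> \<ge> (0::real)" and "finite S"
  shows "(\<Sum>\<eta>\<in>S. \<mu> \<eta> * f \<eta>) = sum \<mu> S * ((\<Sum>\<eta>\<in>S. \<mu> \<eta> * f \<eta>) / sum \<mu> S)"
proof (cases "sum \<mu> S = 0")
  case True
  then have "\<forall>\<eta>\<in>S. \<mu> \<eta> = 0" using assms sum_nonneg_eq_0_iff by blast
  then show ?thesis by simp
qed simp

lemma cap_bound:
  fixes R :: "'e::finite \<Rightarrow> 'e \<Rightarrow> real" and \<mu> :: "'e \<Rightarrow> real"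
  assumes R: "\<forall>\<eta> \<xi>. \<eta> \<noteq> \<xi> \<longrightarrow> R \<eta> \<xi> \<ge> 0"
    and mu: "\<forall>\<eta>. \<mu> \<eta> \<ge> 0"
    and disj: "\<forall>x\<in>{1..p}. \<forall>y\<in>{1..p}. x \<noteq> y \<longrightarrow> \<F> x \<inter> \<F> y = {}"
    and G: "G \<subseteq> {1..p::nat}"
    and BF: "Bs \<subseteq> (\<Union>z\<in>{1..p}. \<F> z)"
  shows "cap \<mu> R (\<Union>x\<in>G. \<F> x) Bs \<le>
     (\<Sum>x\<in>G. \<Sum>y\<in>{1..p} - G. sum \<mu> (\<F> x) * reduced_rate \<mu> R (\<Union>z\<in>{1..p}. \<F> z) (\<F> x) (\<F> y))"
proof -
  define Fs where "Fs = (\<Union>z\<in>{1..p}. \<F> z)"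
  define Gs where "Gs = (\<Union>x\<in>G. \<F> x)"
  have GF: "Gs \<subseteq> Fs" unfolding Gs_def Fs_def using G by auto
  have dj: "False" if "x \<in> {1..p}" "y \<in> {1..p}" "x \<noteq> y" "\<xi> \<in> \<F> x" "\<xi> \<in> \<F> y" for x y \<xi>
    using disj that by blast
  have FG: "Fs - Gs = (\<Union>y\<in>{1..p} - G. \<F> y)"
  proof
    show "Fs - Gs \<subseteq> (\<Union>y\<in>{1..p} - G. \<F> y)"
      unfolding Fs_def Gs_def by blast
    show "(\<Union>y\<in>{1..p} - G. \<F> y) \<subseteq> Fs - Gs"
    proof
      fix \<xi> assume "\<xi> \<in> (\<Union>y\<in>{1..p} - G. \<F> y)"
      then obtain y where y: "y \<in> {1..p}" "y \<notin> G" "\<xi> \<in> \<F> y" by blast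
      have "\<xi> \<notin> Gs"
      proof
        assume "\<xi> \<in> Gs"
        then obtain x where "x \<in> G" "\<xi> \<in> \<F> x" unfolding Gs_def by blast
        then show False using dj[of x y \<xi>] y G by blast
      qed
      then show "\<xi> \<in> Fs - Gs" using y unfolding Fs_def by blast
    qed
  qed
  have finG: "finite G" using G finite_subset by blast
  have disjG: "\<forall>i\<in>G. \<forall>j\<in>G. i \<noteq> j \<longrightarrow> \<F> i \<inter> \<F> j = {}" using disj G by blast
  have disjH: "\<forall>i\<in>{1..p} - G. \<forall>j\<in>{1..p} - G. i \<noteq> j \<longrightarrow> \<F> i \<inter> \<F> j = {}" using disj by blast
  have "cap \<mu> R Gs Bs = (\<Sum>\<eta>\<in>Gs. \<mu> \<eta> * hold_rate R \<eta> * escape_prob R \<eta> Gs Bs)"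
    unfolding cap_def ..
  also have "\<dots> \<le> (\<Sum>\<eta>\<in>Gs. \<mu> \<eta> * hold_rate R \<eta> * (\<Sum>\<xi>\<in>Fs - Gs. escape_prob R \<eta> (Fs - {\<xi>}) {\<xi>}))"
  proof (intro sum_mono mult_left_mono)
    fix \<eta> show "escape_prob R \<eta> Gs Bs \<le> (\<Sum>\<xi>\<in>Fs - Gs. escape_prob R \<eta> (Fs - {\<xi>}) {\<xi>})"
      by (rule escape_compare[OF R GF]) (use BF in \<open>simp add: Fs_def\<close>)
    show "0 \<le> \<mu> \<eta> * hold_rate R \<eta>" for \<eta> using mu hold_nonneg[OF R] by simp
  qed
  also have "\<dots> = (\<Sum>\<eta>\<in>Gs. \<mu> \<eta> * (\<Sum>\<xi>\<in>Fs - Gs. trace_rate R Fs \<eta> \<xi>))"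
    unfolding trace_rate_def by (simp add: sum_distrib_left mult.assoc)
  also have "\<dots> = (\<Sum>x\<in>G. \<Sum>\<eta>\<in>\<F> x. \<mu> \<eta> * (\<Sum>y\<in>{1..p} - G. \<Sum>\<xi>\<in>\<F> y. trace_rate R Fs \<eta> \<xi>))"
  proof -
    have i: "(\<Sum>\<xi>\<in>Fs - Gs. trace_rate R Fs \<eta> \<xi>) = (\<Sum>y\<in>{1..p} - G. \<Sum>\<xi>\<in>\<F> y. trace_rate R Fs \<eta> \<xi>)" for \<eta>
      unfolding FG by (rule sum.UNION_disjoint[OF _ _ disjH]) auto
    have o: "(\<Sum>\<eta>\<in>Gs. h \<eta>) = (\<Sum>x\<in>G. \<Sum>\<eta>\<in>\<F> x. h \<eta>)" for h :: "'e \<Rightarrow> real"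
      unfolding Gs_def by (rule sum.UNION_disjoint[OF finG _ disjG]) auto
    show ?thesis unfolding i o ..
  qed
  also have "\<dots> = (\<Sum>x\<in>G. \<Sum>y\<in>{1..p} - G. \<Sum>\<eta>\<in>\<F> x. \<mu> \<eta> * (\<Sum>\<xi>\<in>\<F> y. trace_rate R Fs \<eta> \<xi>))"
    unfolding sum_distrib_left by (rule sum.cong[OF refl]) (rule sum.swap)
  also have "\<dots> = (\<Sum>x\<in>G. \<Sum>y\<in>{1..p} - G. sum \<mu> (\<F> x) * reduced_rate \<mu> R Fs (\<F> x) (\<F> y))"
    unfolding reduced_rate_def by (rule sum.cong[OF refl], rule sum.cong[OF refl], rule num_eq[OF mu]) simp
  finally show ?thesis unfolding Fs_def Gs_def .
qed

theorem mainTheorem19: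
  fixes R :: "nat \<Rightarrow> 'e::finite \<Rightarrow> 'e \<Rightarrow> real"
    and \<mu> :: "nat \<Rightarrow> 'e \<Rightarrow> real"
    and \<F> :: "nat \<Rightarrow> 'e set" and p :: nat and \<Delta> :: "'e set"
    and \<beta>m \<beta> :: "nat \<Rightarrow> real" and r :: "nat \<Rightarrow> nat \<Rightarrow> real"
  assumes setting: "markov_setting R \<mu>"
    and A: "assumption_A R"
    and p2: "p \<ge> 2"
    and part: "is_partition \<F> p \<Delta>"
    and pos: "\<forall>N\<ge>1. \<beta>m N > 0 \<and> \<beta> N > 0"
    and ratio: "(\<lambda>N. \<beta>m N / \<beta> N) \<longlonglongrightarrow> 0"
    and h0: "H0 \<mu> \<F> p"
    and h1: "H1 \<mu> R \<F> p \<beta> r"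
    and h2: "H2 \<mu> R \<F> p \<beta>m"
    and h3: "H3 R \<Delta> \<beta>"
    and q: "card (recurrent_classes {1..p} r) > 1"
  shows "(\<lambda>N. \<beta> N *
           (\<Sum>G\<in>recurrent_classes {1..p} r.
              cap (\<mu> N) (R N) (\<Union>x\<in>G. \<F> x)
                  (\<Union>H\<in>recurrent_classes {1..p} r - {G}. \<Union>x\<in>H. \<F> x)
              / sum (\<mu> N) (\<Union>x\<in>G. \<F> x))) \<longlonglongrightarrow> 0"
proof -
  define RC where "RC = recurrent_classes {1..p} r"
  define Fs where "Fs = (\<Union>z\<in>{1..p}. \<F> z)"
  define rr where "rr = (\<lambda>N x y. reduced_rate (\<mu> N) (R N) Fs (\<F> x) (\<F> y))"
  have RCsub: "RC \<subseteq> Pow {1..p}" unfolding RC_def recurrent_classes_def by auto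
  then have finRC: "finite RC" by (rule finite_subset) simp
  have Gsub: "G \<subseteq> {1..p}" if "G \<in> RC" for G using RCsub that by blast
  have closed: "\<not> r x y > 0" if G: "G \<in> RC" and x: "x \<in> G" and y: "y \<in> {1..p} - G" for G x y
  proof
    assume rxy: "r x y > 0"
    from G obtain x0 where x0: "x0 \<in> {1..p}" and G_eq: "G = {y\<in>{1..p}. chain_reach {1..p} r x0 y}"
      unfolding RC_def recurrent_classes_def by blast
    have "chain_reach {1..p} r x0 x" using x G_eq by blast
    moreover have "chain_reach {1..p} r x y"
      unfolding chain_reach_def using rxy x y G_eq by (intro r_into_rtrancl) auto
    ultimately have "chain_reach {1..p} r x0 y" unfolding chain_reach_def by (rule rtrancl_trans)
    then show False using y G_eq by blast
  qed
  have Rn: "\<forall>\<eta> \<xi>. \<eta> \<noteq> \<xi> \<longrightarrow> R N \<eta> \<xi> \<ge> 0" if "N \<ge> 1" for N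
    using setting that unfolding markov_setting_def by blast
  have mun: "\<forall>\<eta>. \<mu> N \<eta> \<ge> 0" if "N \<ge> 1" for N
    using setting that unfolding markov_setting_def by blast
  have disj: "\<forall>x\<in>{1..p}. \<forall>y\<in>{1..p}. x \<noteq> y \<longrightarrow> \<F> x \<inter> \<F> y = {}"
    using part unfolding is_partition_def by blast
  have rr_nonneg: "rr N x y \<ge> 0" if "N \<ge> 1" for N x y
    unfolding rr_def reduced_rate_def trace_rate_def
    using mun[OF that] hold_nonneg[OF Rn[OF that]] escape_nonneg[OF Rn[OF that]]
    by (intro divide_nonneg_nonneg sum_nonneg mult_nonneg_nonneg) auto
  have r_lim: "(\<lambda>N. \<beta> N * rr N x y) \<longlonglongrightarrow> r x y" if "x \<in> {1..p}" "y \<in> {1..p}" "x \<noteq> y" for x y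
    using h1 that unfolding H1_def rr_def Fs_def by blast
  have r_zero: "r x y = 0" if G: "G \<in> RC" and x: "x \<in> G" and y: "y \<in> {1..p} - G" for G x y
  proof -
    have xy: "x \<in> {1..p}" "y \<in> {1..p}" "x \<noteq> y" using Gsub[OF G] x y by auto
    have "0 \<le> r x y"
    proof (rule LIMSEQ_le_const[OF r_lim[OF xy]])
      show "\<exists>N. \<forall>n\<ge>N. 0 \<le> \<beta> n * rr n x y"
        using pos rr_nonneg by (intro exI[of _ 1] allI impI mult_nonneg_nonneg) (auto simp: less_imp_le)
    qed
    then show ?thesis using closed[OF G x y] by linarith
  qed
  have term_lim: "(\<lambda>N. \<beta> N * (cap (\<mu> N) (R N) (\<Union>x\<in>G. \<F> x)
                  (\<Union>H\<in>RC - {G}. \<Union>x\<in>H. \<F> x) / sum (\<mu> N) (\<Union>x\<in>G. \<F> x))) \<longlonglongrightarrow> 0"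
    if G: "G \<in> RC" for G
  proof (rule tendsto_sandwich[where f="\<lambda>N. 0" and h="\<lambda>N. \<Sum>x\<in>G. \<Sum>y\<in>{1..p} - G. \<beta> N * rr N x y"])
    have "(\<lambda>N. \<Sum>x\<in>G. \<Sum>y\<in>{1..p} - G. \<beta> N * rr N x y) \<longlonglongrightarrow> (\<Sum>x\<in>G. \<Sum>y\<in>{1..p} - G. r x y)"
      using Gsub[OF G] by (intro tendsto_sum r_lim) auto
    moreover have "(\<Sum>x\<in>G. \<Sum>y\<in>{1..p} - G. r x y) = 0"
      using r_zero[OF G] by simp
    ultimately show "(\<lambda>N. \<Sum>x\<in>G. \<Sum>y\<in>{1..p} - G. \<beta> N * rr N x y) \<longlonglongrightarrow> 0" by simp
    show "(\<lambda>N. 0) \<longlonglongrightarrow> (0::real)" by simp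
    define Gs where "Gs = (\<Union>x\<in>G. \<F> x)"
    define Bs where "Bs = (\<Union>H\<in>RC - {G}. \<Union>x\<in>H. \<F> x)"
    have BF: "Bs \<subseteq> Fs" unfolding Bs_def Fs_def using Gsub by blast
    have finG: "finite G" using Gsub[OF G] finite_subset by blast
    have bounds: "0 \<le> \<beta> N * (cap (\<mu> N) (R N) Gs Bs / sum (\<mu> N) Gs) \<and>
        \<beta> N * (cap (\<mu> N) (R N) Gs Bs / sum (\<mu> N) Gs) \<le> (\<Sum>x\<in>G. \<Sum>y\<in>{1..p} - G. \<beta> N * rr N x y)"
      if N: "N \<ge> 1" for N
    proof -
      let ?c = "cap (\<mu> N) (R N) Gs Bs" and ?m = "sum (\<mu> N) Gs"
      let ?S = "\<Sum>x\<in>G. \<Sum>y\<in>{1..p} - G. rr N x y"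
      have bpos: "\<beta> N > 0" using pos N by blast
      have c0: "0 \<le> ?c" unfolding cap_def
        using mun[OF N] hold_nonneg[OF Rn[OF N]] escape_nonneg[OF Rn[OF N]]
        by (intro sum_nonneg mult_nonneg_nonneg) auto
      have m0: "0 \<le> ?m" using mun[OF N] by (intro sum_nonneg) auto
      have S0: "0 \<le> ?S" using rr_nonneg[OF N] by (intro sum_nonneg) auto
      have "?c \<le> (\<Sum>x\<in>G. \<Sum>y\<in>{1..p} - G. sum (\<mu> N) (\<F> x) * rr N x y)"
        unfolding Gs_def rr_def Fs_def
        by (rule cap_bound[OF Rn[OF N] mun[OF N] disj Gsub[OF G]]) (use BF in \<open>simp add: Fs_def\<close>)
      also have "\<dots> \<le> (\<Sum>x\<in>G. \<Sum>y\<in>{1..p} - G. ?m * rr N x y)"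
      proof (intro sum_mono mult_right_mono rr_nonneg[OF N])
        fix x assume "x \<in> G"
        then show "sum (\<mu> N) (\<F> x) \<le> ?m" unfolding Gs_def
          using mun[OF N] by (intro sum_mono2) auto
      qed
      also have "\<dots> = ?m * ?S" by (simp add: sum_distrib_left)
      finally have cS: "?c \<le> ?m * ?S" .
      have "?c / ?m \<le> ?S"
      proof (cases "?m = 0")
        case True then show ?thesis using S0 by simp
      next
        case False then have "?m > 0" using m0 by simp
        then show ?thesis using cS by (simp add: divide_le_eq mult.commute)
      qed
      then have "\<beta> N * (?c / ?m) \<le> \<beta> N * ?S" using bpos by (intro mult_left_mono) auto
      also have "\<beta> N * ?S = (\<Sum>x\<in>G. \<Sum>y\<in>{1..p} - G. \<beta> N * rr N x y)"
        by (simp add: sum_distrib_left)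
      finally show ?thesis using bpos c0 m0 by simp
    qed
    show "\<forall>\<^sub>F N in sequentially. 0 \<le> \<beta> N * (cap (\<mu> N) (R N) (\<Union>x\<in>G. \<F> x)
                  (\<Union>H\<in>RC - {G}. \<Union>x\<in>H. \<F> x) / sum (\<mu> N) (\<Union>x\<in>G. \<F> x))"
      unfolding eventually_sequentially using bounds unfolding Gs_def Bs_def by blast
    show "\<forall>\<^sub>F N in sequentially. \<beta> N * (cap (\<mu> N) (R N) (\<Union>x\<in>G. \<F> x)
                  (\<Union>H\<in>RC - {G}. \<Union>x\<in>H. \<F> x) / sum (\<mu> N) (\<Union>x\<in>G. \<F> x))
            \<le> (\<Sum>x\<in>G. \<Sum>y\<in>{1..p} - G. \<beta> N * rr N x y)"
      unfolding eventually_sequentially using bounds unfolding Gs_def Bs_def by blast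
  qed
  have "(\<lambda>N. \<Sum>G\<in>RC. \<beta> N * (cap (\<mu> N) (R N) (\<Union>x\<in>G. \<F> x)
                  (\<Union>H\<in>RC - {G}. \<Union>x\<in>H. \<F> x) / sum (\<mu> N) (\<Union>x\<in>G. \<F> x))) \<longlonglongrightarrow> 0"
    using tendsto_sum[OF term_lim] by simp
  then show ?thesis unfolding RC_def by (simp add: sum_distrib_left)
qed


end
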